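(* Every direct summand of a semi-generalized Bassian group is semi-generalized Bassian.
   Context: All groups are additively written abelian groups. A subgroup $H$ of a group $A$ is essential in $A$ if $H \cap S \neq \{0\}$ for every non-zero subgroup $S$ of $A$. A group $G$ is semi-generalized Bassian if, for every subgroup $H \le G$, the existence of an injective homomorphism $G \to G/H$ implies that $H$ is an essential subgroup of some direct summand of $G$. *)

theory Defs
  imports "HOL-Algebra.Algebra"
begin

text \<open>Abelian groups are modelled as HOL-Algebra commutative groups (the group
operation is written multiplicatively by the library; the identity plays the role of 0).\<close>

definition essential_in :: "'a set \<Rightarrow> 'a set \<Rightarrow> ('a, 'b) monoid_scheme \<Rightarrow> bool" where
  "essential_in H A G \<longleftrightarrow> H \<subseteq> A \<and>
     (\<forall>S. subgroup S G \<longrightarrow> S \<subseteq> A \<longrightarrow> S \<noteq> {\<one>\<^bsub>G\<^esub>} \<longrightarrow> H \<inter> S \<noteq> {\<one>\<^bsub>G\<^esub>})"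

definition direct_summand :: "'a set \<Rightarrow> ('a, 'b) monoid_scheme \<Rightarrow> bool" where
  "direct_summand A G \<longleftrightarrow> subgroup A G \<and>
     (\<exists>B. subgroup B G \<and> A \<inter> B = {\<one>\<^bsub>G\<^esub>} \<and> A <#>\<^bsub>G\<^esub> B = carrier G)"

definition semi_generalized_bassian :: "('a, 'b) monoid_scheme \<Rightarrow> bool" where
  "semi_generalized_bassian G \<longleftrightarrow> comm_group G \<and>
     (\<forall>H. subgroup H G \<longrightarrow>
        (\<exists>f. f \<in> hom G (G Mod H) \<and> inj_on f (carrier G)) \<longrightarrow>
        (\<exists>A. direct_summand A G \<and> essential_in H A G))"

end

theory Submission
  imports Defs
begin

lemma (in comm_group) t1:
  assumes c: "a \<in> carrier G" "b \<in> carrier G" "a' \<in> carrier G" "b' \<in> carrier G" and e: "a \<otimes> b = a' \<otimes> b'"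
  shows "inv a' \<otimes> a = b' \<otimes> inv b"
proof -
  have "b' = inv a' \<otimes> (a \<otimes> b)" using inv_solve_left[of b' a' "a \<otimes> b"] c e by simp
  then show ?thesis using inv_solve_right[of "inv a' \<otimes> a" b' b] c by (simp add: m_assoc)
qed


lemma (in comm_group) decomp_unique:
  assumes "subgroup A G" "subgroup B G" "A \<inter> B = {\<one>}"
    and "a \<in> A" "b \<in> B" "a' \<in> A" "b' \<in> B" "a \<otimes> b = a' \<otimes> b'"
  shows "a = a'"
proof -
  have c: "a \<in> carrier G" "b \<in> carrier G" "a' \<in> carrier G" "b' \<in> carrier G"
    using assms subgroup.subset by blast+
  have "inv a' \<otimes> a = b' \<otimes> inv b"
    using c assms(8) by (rule t1)
  moreover have "inv a' \<otimes> a \<in> A" using assms subgroup.m_closed subgroup.m_inv_closed by metis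
  moreover have "b' \<otimes> inv b \<in> B" using assms subgroup.m_closed subgroup.m_inv_closed by metis
  ultimately have "inv a' \<otimes> a = \<one>" using assms(3) by auto
  then show ?thesis using c by (metis inv_equality inv_inv inv_closed)
qed

lemma (in comm_group) decomp:
  assumes A: "subgroup A G" and B: "subgroup B G" and AB: "A \<inter> B = {\<one>}" and AB2: "A <#> B = carrier G"
  shows "\<exists>p. p \<in> hom G G \<and> (\<forall>g\<in>carrier G. p g \<in> A \<and> inv (p g) \<otimes> g \<in> B)
           \<and> (\<forall>a\<in>A. \<forall>b\<in>B. p (a \<otimes> b) = a)"
proof -
  define p where "p g = (SOME a. a \<in> A \<and> (\<exists>b\<in>B. g = a \<otimes> b))" for g
  have Ac: "\<And>x. x \<in> A \<Longrightarrow> x \<in> carrier G" and Bc: "\<And>x. x \<in> B \<Longrightarrow> x \<in> carrier G"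
    using A B subgroup.subset by blast+
  have ex: "\<exists>a. a \<in> A \<and> (\<exists>b\<in>B. g = a \<otimes> b)" if "g \<in> carrier G" for g
    using that AB2 unfolding set_mult_def by blast
  have pg: "p g \<in> A \<and> (\<exists>b\<in>B. g = p g \<otimes> b)" if "g \<in> carrier G" for g
    unfolding p_def using someI_ex[OF ex[OF that]] .
  have pab: "p (a \<otimes> b) = a" if "a \<in> A" "b \<in> B" for a b
  proof -
    have "a \<otimes> b \<in> carrier G" using that Ac Bc by blast
    from pg[OF this] obtain b' where "p (a \<otimes> b) \<in> A" "b' \<in> B" "a \<otimes> b = p (a \<otimes> b) \<otimes> b'" by blast
    then show ?thesis using decomp_unique[OF A B AB] that by metis
  qed
  have inB: "inv (p g) \<otimes> g \<in> B" if "g \<in> carrier G" for g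
  proof -
    from pg[OF that] obtain b where "p g \<in> A" "b \<in> B" "g = p g \<otimes> b" by blast
    then show ?thesis using Ac Bc inv_solve_left'[of b "p g" g] that by blast
  qed
  have hom: "p \<in> hom G G"
  proof (rule homI)
    fix x assume "x \<in> carrier G" then show "p x \<in> carrier G" using pg Ac by blast
  next
    fix x y assume x: "x \<in> carrier G" and y: "y \<in> carrier G"
    from pg[OF x] obtain bx where bx: "p x \<in> A" "bx \<in> B" "x = p x \<otimes> bx" by blast
    from pg[OF y] obtain by' where by': "p y \<in> A" "by' \<in> B" "y = p y \<otimes> by'" by blast
    have "x \<otimes> y = (p x \<otimes> bx) \<otimes> (p y \<otimes> by')" using bx by' by simp
    also have "\<dots> = (p x \<otimes> p y) \<otimes> (bx \<otimes> by')"
      using Ac[OF bx(1)] Ac[OF by'(1)] Bc[OF bx(2)] Bc[OF by'(2)] by (simp add: m_ac)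
    finally have "x \<otimes> y = (p x \<otimes> p y) \<otimes> (bx \<otimes> by')" .
    moreover have "p x \<otimes> p y \<in> A" "bx \<otimes> by' \<in> B" using bx by' A B subgroup.m_closed by metis+
    ultimately show "p (x \<otimes> y) = p x \<otimes> p y" using pab by metis
  qed
  show ?thesis using hom pg inB pab by blast
qed



lemma (in group) nontriv_pow_in:
  assumes "subgroup C G" "subgroup K G"
    and ess: "\<forall>S. subgroup S G \<longrightarrow> S \<subseteq> C \<longrightarrow> S \<noteq> {\<one>} \<longrightarrow> K \<inter> S \<noteq> {\<one>}"
    and "y \<in> C" "y \<noteq> \<one>"
  shows "\<exists>i::int. y [^] i \<in> K \<and> y [^] i \<noteq> \<one>"
proof -
  have yc: "y \<in> carrier G" using assms subgroup.subset by blast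
  let ?S = "generate G {y}"
  have S: "subgroup ?S G" using yc by (simp add: generate_is_subgroup)
  have Seq: "?S = {y [^] (k::int) | k. k \<in> UNIV}" using generate_pow[OF yc] .
  have "?S \<subseteq> C" unfolding Seq using subgroup_int_pow_closed[OF assms(1) assms(4)] by auto
  moreover have "y \<in> ?S" unfolding Seq using yc by (auto intro!: exI[of _ 1])
  ultimately have "K \<inter> ?S \<noteq> {\<one>}" using ess S assms(5) by blast
  moreover have "\<one> \<in> K \<inter> ?S" using S assms(2) subgroup.one_closed by blast
  ultimately obtain z where "z \<in> K \<inter> ?S" "z \<noteq> \<one>" by blast
  then show ?thesis unfolding Seq by blast
qed

lemma (in group) locnil:
  assumes d: "d \<in> hom G G" and C: "subgroup C G" and dC: "\<forall>c\<in>C. d c \<in> C"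
    and K: "subgroup K G" and dK: "\<forall>k\<in>K. d k = \<one>"
    and ess: "\<forall>S. subgroup S G \<longrightarrow> S \<subseteq> C \<longrightarrow> S \<noteq> {\<one>} \<longrightarrow> K \<inter> S \<noteq> {\<one>}"
    and y: "y \<in> C"
  shows "\<exists>n. (d ^^ n) y = \<one>"
proof -
  have Cc: "\<And>x. x \<in> C \<Longrightarrow> x \<in> carrier G" using C subgroup.subset by blast
  have dpow: "\<And>x (i::int). x \<in> carrier G \<Longrightarrow> d (x [^] i) = d x [^] i"
    using hom_int_pow[OF d _ is_group is_group] by blast
  have dnpow: "\<And>x (i::nat). x \<in> carrier G \<Longrightarrow> d (x [^] i) = d x [^] i"
    using hom_nat_pow[OF d _ is_group is_group] by blast
  have dcar: "\<And>x. x \<in> carrier G \<Longrightarrow> d x \<in> carrier G" using d by (auto simp: hom_def)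
  have tors: "\<forall>y\<in>C. 0 < m \<longrightarrow> y [^] m = \<one> \<longrightarrow> (\<exists>n. (d ^^ n) y = \<one>)" for m :: nat
  proof (induction m rule: less_induct)
    case (less m)
    show ?case
    proof (intro ballI impI)
      fix y assume yC: "y \<in> C" and m0: "0 < m" and ym: "y [^] m = \<one>"
      have yc: "y \<in> carrier G" using Cc yC .
      show "\<exists>n. (d ^^ n) y = \<one>"
      proof (cases "y = \<one>")
        case True then show ?thesis by (intro exI[of _ 0]) simp
      next
        case False
        obtain i :: int where i: "y [^] i \<in> K" "y [^] i \<noteq> \<one>"
          using nontriv_pow_in[OF C K ess yC False] by blast
        define j where "j = nat (i mod int m)"
        have "i = int m * (i div int m) + i mod int m" by simp
        then have "y [^] i = (y [^] (int m)) [^] (i div int m) \<otimes> y [^] (i mod int m)"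
          by (metis int_pow_mult int_pow_pow yc)
        also have "y [^] (int m) = \<one>" using ym by (simp add: int_pow_int)
        finally have "y [^] i = y [^] (i mod int m)" using yc by simp
        also have "\<dots> = y [^] j" unfolding j_def using m0
          by (metis int_pow_int Euclidean_Rings.pos_mod_sign of_nat_0_less_iff nat_0_le)
        finally have yij: "y [^] i = y [^] j" .
        have jm: "j < m" unfolding j_def using m0
          by (simp add: nat_less_iff)
        have j0: "0 < j" using yij i(2) by (cases j) auto
        have "d y [^] j = \<one>" using dnpow[OF yc, of j] yij i(1) dK by simp
        then obtain n where "(d ^^ n) (d y) = \<one>" using less.IH[OF jm] dC yC j0 by blast
        then show ?thesis by (intro exI[of _ "Suc n"]) (simp add: funpow_Suc_right del: funpow.simps)
      qed
    qed
  qed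
  show ?thesis
  proof (cases "y = \<one>")
    case True then show ?thesis by (intro exI[of _ 0]) simp
  next
    case False
    have yc: "y \<in> carrier G" using Cc y .
    obtain i :: int where i: "y [^] i \<in> K" "y [^] i \<noteq> \<one>"
      using nontriv_pow_in[OF C K ess y False] by blast
    have di: "d y [^] i = \<one>" using dpow[OF yc, of i] i(1) dK by simp
    have i0: "i \<noteq> 0" using i(2) by auto
    have "d y [^] (nat \<bar>i\<bar>) = \<one>"
    proof (cases "i \<ge> 0")
      case True then show ?thesis using di by (metis int_pow_int abs_of_nonneg nat_0_le)
    next
      case False
      then have "i = - int (nat \<bar>i\<bar>)" by simp
      then have "d y [^] i = inv (d y [^] (nat \<bar>i\<bar>))" using dcar[OF yc] by (metis int_pow_neg_int)
      then show ?thesis using di dcar[OF yc] by (metis inv_eq_1_iff nat_pow_closed)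
    qed
    then obtain n where "(d ^^ n) (d y) = \<one>" using tors[of "nat \<bar>i\<bar>"] dC y i0 by force
    then show ?thesis by (intro exI[of _ "Suc n"]) (simp add: funpow_Suc_right del: funpow.simps)
  qed
qed



lemma (in comm_group) key:
  assumes A: "subgroup A G" and B: "subgroup B G" and AB: "A \<inter> B = {\<one>}"
    and pAh: "pA \<in> hom G G" and pAin: "\<forall>g\<in>carrier G. pA g \<in> A \<and> inv (pA g) \<otimes> g \<in> B"
    and pAab: "\<forall>a\<in>A. \<forall>b\<in>B. pA (a \<otimes> b) = a"
    and C: "subgroup C G" and D: "subgroup D G" and CD: "C \<inter> D = {\<one>}"
    and pCh: "pC \<in> hom G G" and pCin: "\<forall>g\<in>carrier G. pC g \<in> C \<and> inv (pC g) \<otimes> g \<in> D"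
    and pCab: "\<forall>a\<in>C. \<forall>b\<in>D. pC (a \<otimes> b) = a"
    and K: "subgroup K G" and KA: "K \<subseteq> A" and ess: "essential_in K C G"
  shows "direct_summand (pA ` C) (G\<lparr>carrier := A\<rparr>) \<and> essential_in K (pA ` C) (G\<lparr>carrier := A\<rparr>)"
proof -
  have Ac: "\<And>x. x \<in> A \<Longrightarrow> x \<in> carrier G" using A subgroup.subset by blast
  have Bc: "\<And>x. x \<in> B \<Longrightarrow> x \<in> carrier G" using B subgroup.subset by blast
  have Cc: "\<And>x. x \<in> C \<Longrightarrow> x \<in> carrier G" using C subgroup.subset by blast
  have Dc: "\<And>x. x \<in> D \<Longrightarrow> x \<in> carrier G" using D subgroup.subset by blast
  note Am = subgroup.m_closed[OF A] and Ai = subgroup.m_inv_closed[OF A] and A1 = subgroup.one_closed[OF A]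
  note Bm = subgroup.m_closed[OF B] and Bi = subgroup.m_inv_closed[OF B] and B1 = subgroup.one_closed[OF B]
  note Cm = subgroup.m_closed[OF C] and Ci = subgroup.m_inv_closed[OF C] and C1 = subgroup.one_closed[OF C]
  note Dm = subgroup.m_closed[OF D] and Di = subgroup.m_inv_closed[OF D] and D1 = subgroup.one_closed[OF D]
  note K1 = subgroup.one_closed[OF K]
  have KC: "K \<subseteq> C" and ess': "\<forall>S. subgroup S G \<longrightarrow> S \<subseteq> C \<longrightarrow> S \<noteq> {\<one>} \<longrightarrow> K \<inter> S \<noteq> {\<one>}"
    using ess unfolding essential_in_def by auto
  interpret hA: group_hom G G pA using pAh by (simp add: group_hom_def group_hom_axioms_def is_group)
  interpret hC: group_hom G G pC using pCh by (simp add: group_hom_def group_hom_axioms_def is_group)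
  have pA_A: "pA a = a" if "a \<in> A" for a using pAab that B1 Ac by fastforce
  have pC_C: "pC a = a" if "a \<in> C" for a using pCab that D1 Cc by fastforce
  have pC_D: "pC d = \<one>" if "d \<in> D" for d using pCab that C1 Dc by fastforce
  have pC_1: "g \<in> D" if "g \<in> carrier G" "pC g = \<one>" for g using pCin that by force
  have pAc: "pA g \<in> carrier G" if "g \<in> carrier G" for g using that by simp
  have pCc: "pC g \<in> carrier G" if "g \<in> carrier G" for g using that by simp
  define qA where "qA x = inv (pA x) \<otimes> x" for x
  have qAc: "qA x \<in> carrier G" if "x \<in> carrier G" for x using that unfolding qA_def by simp
  have qAm: "qA (x \<otimes> y) = qA x \<otimes> qA y" if "x \<in> carrier G" "y \<in> carrier G" for x y
    using that unfolding qA_def by (simp add: inv_mult m_ac)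
  define d where "d x = pC (qA x)" for x
  have dc: "d x \<in> carrier G" if "x \<in> carrier G" for x using that qAc unfolding d_def by simp
  have dh: "d \<in> hom G G"
    by (rule homI) (simp_all add: dc d_def qAm qAc)
  have dC: "\<forall>c\<in>C. d c \<in> C" using pCin qAc Cc unfolding d_def by blast
  have dK: "\<forall>k\<in>K. d k = \<one>" using KA pA_A Ac unfolding d_def qA_def by auto
  have d1: "d \<one> = \<one>" unfolding d_def qA_def by simp
  have dm: "d (x \<otimes> y) = d x \<otimes> d y" if "x \<in> carrier G" "y \<in> carrier G" for x y
    using that unfolding d_def by (simp add: qAm qAc)
  have N: "\<exists>n. (d ^^ n) y = \<one>" if "y \<in> C" for y
    using locnil[OF dh C dC K dK ess' that] .
  have rho: "pC (pA c) = c \<otimes> inv (d c)" if "c \<in> C" for c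
  proof -
    have c: "c \<in> carrier G" using Cc that .
    have "c \<otimes> inv (qA c) = c \<otimes> (pA c \<otimes> inv c)" unfolding qA_def using c by (simp add: inv_mult)
    also have "\<dots> = pA c \<otimes> (c \<otimes> inv c)" using c pAc[OF c] inv_closed[OF c] by (rule m_lcomm)
    also have "\<dots> = pA c" using c by simp
    finally have "pA c = c \<otimes> inv (qA c)" by simp
    then have "pC (pA c) = pC c \<otimes> inv (pC (qA c))" using c qAc by simp
    then show ?thesis using pC_C that unfolding d_def by simp
  qed
  have surj: "\<forall>y\<in>C. (d ^^ n) y = \<one> \<longrightarrow> (\<exists>x\<in>C. x \<otimes> inv (d x) = y)" for n
  proof (induction n)
    case 0
    have "\<one> \<in> C" using C1 .
    then show ?case using d1 by (auto intro!: bexI[of _ "\<one>"])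
  next
    case (Suc n)
    show ?case
    proof (intro ballI impI)
      fix y assume y: "y \<in> C" and "(d ^^ Suc n) y = \<one>"
      then have "(d ^^ n) (d y) = \<one>" by (simp add: funpow_Suc_right del: funpow.simps)
      then obtain z where z: "z \<in> C" "z \<otimes> inv (d z) = d y" using Suc.IH dC y by blast
      have yc: "y \<in> carrier G" and zc: "z \<in> carrier G" using y z Cc by auto
      have ac4: "a \<otimes> b \<otimes> (u \<otimes> v) = a \<otimes> (b \<otimes> v) \<otimes> u"
        if "a \<in> carrier G" "b \<in> carrier G" "u \<in> carrier G" "v \<in> carrier G" for a b u v
        using that by (simp add: m_ac)
      have "(y \<otimes> z) \<otimes> inv (d (y \<otimes> z)) = (y \<otimes> z) \<otimes> (inv (d y) \<otimes> inv (d z))"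
        using yc zc by (simp only: dm inv_mult[OF dc[OF yc] dc[OF zc]])
      also have "\<dots> = y \<otimes> (z \<otimes> inv (d z)) \<otimes> inv (d y)"
        using yc zc dc by (intro ac4) auto
      also have "\<dots> = y \<otimes> d y \<otimes> inv (d y)" by (simp only: z(2))
      also have "\<dots> = y" using yc dc[OF yc] by (simp add: m_assoc)
      finally show "\<exists>x\<in>C. x \<otimes> inv (d x) = y" using Cm[OF y z(1)] by blast
    qed
  qed
  have inj: "c = \<one>" if "c \<in> C" "c \<otimes> inv (d c) = \<one>" for c
  proof -
    have c: "c \<in> carrier G" using Cc that(1) .
    have dcc: "d c = c" using that(2) c dc[OF c] inv_solve_right'[of "\<one>" c "d c"] by simp
    have "(d ^^ n) c = c" for n by (induction n) (simp_all add: dcc)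
    then show ?thesis using N[OF that(1)] by metis
  qed
  let ?E = "pA ` C" and ?F = "A \<inter> D"
  have EA: "?E \<subseteq> A" using pAin Cc by blast
  have E: "subgroup ?E G"
  proof (rule subgroupI)
    show "?E \<subseteq> carrier G" using EA Ac by blast
    show "?E \<noteq> {}" using C1 by blast
  next
    fix a assume "a \<in> ?E" then obtain c where "c \<in> C" "a = pA c" by blast
    then show "inv a \<in> ?E" using Ci Cc
      by (metis hA.hom_inv image_eqI)
  next
    fix a b assume "a \<in> ?E" "b \<in> ?E"
    then obtain c c' where "c \<in> C" "a = pA c" "c' \<in> C" "b = pA c'" by blast
    then show "a \<otimes> b \<in> ?E" using Cm Cc
      by (metis hA.hom_mult image_eqI)
  qed
  have F: "subgroup ?F G" using subgroups_Inter_pair[OF A D] .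
  have E': "subgroup ?E (G\<lparr>carrier := A\<rparr>)" using subgroup_incl[OF E A EA] .
  have F': "subgroup ?F (G\<lparr>carrier := A\<rparr>)" using subgroup_incl[OF F A] by blast
  have EF: "?E \<inter> ?F = {\<one>}"
  proof
    show "?E \<inter> ?F \<subseteq> {\<one>}"
    proof
      fix x assume "x \<in> ?E \<inter> ?F"
      then obtain c where c: "c \<in> C" "x = pA c" "x \<in> D" by blast
      then have "c \<otimes> inv (d c) = \<one>" using rho pC_D by metis
      then have "c = \<one>" using inj c(1) by blast
      then show "x \<in> {\<one>}" using c by simp
    qed
    show "{\<one>} \<subseteq> ?E \<inter> ?F" using C1 A1 D1 hA.hom_one by (metis Int_iff empty_subsetI image_eqI insert_subset)
  qed
  have EF2: "?E <#> ?F = A"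
  proof
    show "?E <#> ?F \<subseteq> A" unfolding set_mult_def using EA Am by blast
    show "A \<subseteq> ?E <#> ?F"
    proof
      fix a assume a: "a \<in> A"
      have ac: "a \<in> carrier G" using Ac a .
      obtain n where "(d ^^ n) (pC a) = \<one>" using N pCin ac by blast
      then obtain x where x: "x \<in> C" "x \<otimes> inv (d x) = pC a" using surj pCin ac by blast
      have xc: "x \<in> carrier G" using Cc x(1) .
      define w where "w = inv (pA x) \<otimes> a"
      have wA: "w \<in> A" unfolding w_def using pAin xc a Am Ai by metis
      have "pC w = inv (pC (pA x)) \<otimes> pC a" unfolding w_def using xc ac by simp
      also have "\<dots> = \<one>" using rho[OF x(1)] x(2) ac by simp
      finally have "w \<in> D" using pC_1 Ac wA by blast
      moreover have "a = pA x \<otimes> w" unfolding w_def using xc ac by (simp add: m_assoc[symmetric])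
      ultimately show "a \<in> ?E <#> ?F" unfolding set_mult_def using x(1) wA by blast
    qed
  qed
  have ds: "direct_summand ?E (G\<lparr>carrier := A\<rparr>)"
    unfolding direct_summand_def using E' F' EF EF2 by auto
  have KE: "K \<subseteq> ?E"
  proof
    fix k assume "k \<in> K" then show "k \<in> ?E" using KA KC pA_A by (metis image_eqI subsetD)
  qed
  have "essential_in K ?E (G\<lparr>carrier := A\<rparr>)"
    unfolding essential_in_def
  proof (intro conjI allI impI)
    show "K \<subseteq> ?E" by (rule KE)
    fix S assume S': "subgroup S (G\<lparr>carrier := A\<rparr>)" and SE: "S \<subseteq> ?E" and S1: "S \<noteq> {\<one>\<^bsub>G\<lparr>carrier := A\<rparr>\<^esub>}"
    have S: "subgroup S G" using incl_subgroup[OF A S'] .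
    have S1': "S \<noteq> {\<one>}" using S1 by simp
    obtain s where s: "s \<in> S" "s \<noteq> \<one>" using S1' subgroup.one_closed[OF S] by blast
    let ?S = "{c \<in> C. pA c \<in> S}"
    have SS: "subgroup ?S G"
    proof (rule subgroupI)
      show "?S \<subseteq> carrier G" using Cc by blast
      show "?S \<noteq> {}" using C1 subgroup.one_closed[OF S] hA.hom_one by fastforce
    next
      fix a assume "a \<in> ?S" then show "inv a \<in> ?S"
        using Ci subgroup.m_inv_closed[OF S] Cc by (metis (no_types, lifting) hA.hom_inv mem_Collect_eq)
    next
      fix a b assume "a \<in> ?S" "b \<in> ?S" then show "a \<otimes> b \<in> ?S"
        using Cm subgroup.m_closed[OF S] Cc by (metis (no_types, lifting) hA.hom_mult mem_Collect_eq)
    qed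
    obtain c where c: "c \<in> C" "s = pA c" using s SE by blast
    have "c \<noteq> \<one>" using c s by auto
    then have "?S \<noteq> {\<one>}" using c s by blast
    then have "K \<inter> ?S \<noteq> {\<one>}" using ess' SS by blast
    moreover have "\<one> \<in> K \<inter> ?S" using K1 C1 subgroup.one_closed[OF S] hA.hom_one by fastforce
    ultimately obtain k where k: "k \<in> K" "k \<in> ?S" "k \<noteq> \<one>" by blast
    then have "k \<in> S" using pA_A KA by auto
    then have "K \<inter> S \<noteq> {\<one>}" using k by blast
    then show "K \<inter> S \<noteq> {\<one>\<^bsub>G\<lparr>carrier := A\<rparr>\<^esub>}" by simp
  qed
  then show ?thesis using ds by blast
qed


lemma (in comm_group) ac4x:
  "a \<in> carrier G \<Longrightarrow> b \<in> carrier G \<Longrightarrow> u \<in> carrier G \<Longrightarrow> v \<in> carrier G \<Longrightarrow>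
   a \<otimes> b \<otimes> (u \<otimes> v) = a \<otimes> u \<otimes> (b \<otimes> v)"
  by (simp add: m_ac)
lemma (in comm_group) divx:
  "a \<in> carrier G \<Longrightarrow> b \<in> carrier G \<Longrightarrow> c \<in> carrier G \<Longrightarrow> d \<in> carrier G \<Longrightarrow>
   (a \<otimes> b) \<otimes> inv (c \<otimes> d) = (a \<otimes> inv c) \<otimes> (b \<otimes> inv d)"
  by (simp add: inv_mult m_ac)
lemma (in comm_group) solx:
  "a \<in> carrier G \<Longrightarrow> b \<in> carrier G \<Longrightarrow> b = inv a \<otimes> (a \<otimes> b)"
  by (simp add: m_assoc[symmetric])

lemma (in comm_group) main_lemma:
  assumes "True"
    and "semi_generalized_bassian G"
    and "direct_summand A G"
  shows "semi_generalized_bassian (G\<lparr>carrier := A\<rparr>)"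
proof -
  obtain B where A: "subgroup A G" and B: "subgroup B G" and AB: "A \<inter> B = {\<one>}"
      and AB2: "A <#> B = carrier G"
    using assms(3) unfolding direct_summand_def by blast
  obtain pA where pAh: "pA \<in> hom G G" and pAin: "\<forall>g\<in>carrier G. pA g \<in> A \<and> inv (pA g) \<otimes> g \<in> B"
      and pAab: "\<forall>a\<in>A. \<forall>b\<in>B. pA (a \<otimes> b) = a"
    using decomp[OF A B AB AB2] by blast
  have Ac: "\<And>x. x \<in> A \<Longrightarrow> x \<in> carrier G" using A subgroup.subset by blast
  have Bc: "\<And>x. x \<in> B \<Longrightarrow> x \<in> carrier G" using B subgroup.subset by blast
  note Am = subgroup.m_closed[OF A] and Ai = subgroup.m_inv_closed[OF A]
  note Bm = subgroup.m_closed[OF B] and Bi = subgroup.m_inv_closed[OF B]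
  interpret hA: group_hom G G pA using pAh by (simp add: group_hom_def group_hom_axioms_def is_group)
  let ?G' = "G\<lparr>carrier := A\<rparr>"
  have grp': "group ?G'" using subgroup_imp_group[OF A] .
  have cg': "comm_group ?G'"
    by (rule group.group_comm_groupI[OF grp']) (simp add: m_comm Ac)
  have SGB: "\<And>H. subgroup H G \<Longrightarrow> (\<exists>f. f \<in> hom G (G Mod H) \<and> inj_on f (carrier G)) \<Longrightarrow>
        (\<exists>C. direct_summand C G \<and> essential_in H C G)"
    using assms(2) unfolding semi_generalized_bassian_def by blast
  show ?thesis unfolding semi_generalized_bassian_def
  proof (intro conjI allI impI)
    show "comm_group ?G'" by (rule cg')
    fix K assume K': "subgroup K ?G'" and "\<exists>f. f \<in> hom ?G' (?G' Mod K) \<and> inj_on f (carrier ?G')"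
    then obtain \<phi> where ph: "\<phi> \<in> hom ?G' (?G' Mod K)" and phi: "inj_on \<phi> A" by auto
    have K: "subgroup K G" using incl_subgroup[OF A K'] .
    have KA: "K \<subseteq> A" using subgroup.subset[OF K'] by simp
    have Kn: "K \<lhd> G" using subgroup_imp_normal[OF K] .
    have Kc: "K \<subseteq> carrier G" using KA Ac by blast
    have phex: "\<exists>a'. a' \<in> A \<and> \<phi> a = K #> a'" if a: "a \<in> A" for a
    proof -
      have "\<phi> a \<in> carrier (?G' Mod K)" using ph a by (auto simp: hom_def Pi_def)
      then show ?thesis by (auto simp: FactGroup_def RCOSETS_def)
    qed
    define r where "r a = (SOME a'. a' \<in> A \<and> \<phi> a = K #> a')" for a
    have r: "r a \<in> A \<and> \<phi> a = K #> r a" if "a \<in> A" for a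
      unfolding r_def using someI_ex[OF phex[OF that]] .
    have rc: "r a \<in> carrier G" if "a \<in> A" for a using r[OF that] Ac by blast
    have phm: "\<phi> (a \<otimes> b) = \<phi> a <#> \<phi> b" if "a \<in> A" "b \<in> A" for a b
    proof -
      have "\<phi> (a \<otimes>\<^bsub>?G'\<^esub> b) = \<phi> a \<otimes>\<^bsub>?G' Mod K\<^esub> \<phi> b" using ph that by (auto simp: hom_def)
      then show ?thesis by (simp add: FactGroup_def)
    qed
    have R2: "K #> r (a \<otimes> b) = K #> (r a \<otimes> r b)" if "a \<in> A" "b \<in> A" for a b
    proof -
      have "K #> r (a \<otimes> b) = \<phi> (a \<otimes> b)" using r[OF Am[OF that]] by simp
      also have "\<dots> = (K #> r a) <#> (K #> r b)" using phm[OF that] r that by simp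
      also have "\<dots> = K #> (r a \<otimes> r b)" using normal.rcos_sum[OF Kn rc[OF that(1)] rc[OF that(2)]] .
      finally show ?thesis .
    qed
    define q where "q g = inv (pA g) \<otimes> g" for g
    have qB: "q g \<in> B" if "g \<in> carrier G" for g using pAin that unfolding q_def by blast
    have qc: "q g \<in> carrier G" if "g \<in> carrier G" for g using Bc qB that by blast
    have pAA: "pA g \<in> A" if "g \<in> carrier G" for g using pAin that by blast
    have qm: "q (x \<otimes> y) = q x \<otimes> q y" if "x \<in> carrier G" "y \<in> carrier G" for x y
      using that unfolding q_def by (simp add: inv_mult m_ac)
    have pq: "pA g \<otimes> q g = g" if "g \<in> carrier G" for g
      using that unfolding q_def by (simp add: m_assoc[symmetric])
    define f where "f g = K #> (r (pA g) \<otimes> q g)" for g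
    have fh: "f \<in> hom G (G Mod K)"
    proof (rule homI)
      fix x assume x: "x \<in> carrier G"
      show "f x \<in> carrier (G Mod K)" unfolding f_def FactGroup_def
        using rcosetsI[OF Kc] rc[OF pAA[OF x]] qc[OF x] by simp
    next
      fix x y assume x: "x \<in> carrier G" and y: "y \<in> carrier G"
      have c: "r (pA x) \<in> carrier G" "r (pA y) \<in> carrier G" "q x \<in> carrier G" "q y \<in> carrier G"
        using rc pAA qc x y by blast+
      have "f (x \<otimes> y) = K #> (r (pA x \<otimes> pA y) \<otimes> (q x \<otimes> q y))"
        unfolding f_def using x y by (simp add: qm)
      also have "\<dots> = (K #> r (pA x \<otimes> pA y)) #> (q x \<otimes> q y)"
        using coset_mult_assoc[OF Kc rc[OF Am[OF pAA[OF x] pAA[OF y]]]] c by simp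
      also have "\<dots> = (K #> (r (pA x) \<otimes> r (pA y))) #> (q x \<otimes> q y)"
        using R2[OF pAA[OF x] pAA[OF y]] by simp
      also have "\<dots> = K #> (r (pA x) \<otimes> r (pA y) \<otimes> (q x \<otimes> q y))"
        using coset_mult_assoc[OF Kc] c by simp
      also have "\<dots> = K #> (r (pA x) \<otimes> q x \<otimes> (r (pA y) \<otimes> q y))"
        using ac4x[OF c(1) c(2) c(3) c(4)] by simp
      also have "\<dots> = f x <#> f y" unfolding f_def
        using normal.rcos_sum[OF Kn] c by simp
      finally show "f (x \<otimes> y) = f x \<otimes>\<^bsub>G Mod K\<^esub> f y" by (simp add: FactGroup_def)
    qed
    have fi: "inj_on f (carrier G)"
    proof (rule inj_onI)
      fix x y assume x: "x \<in> carrier G" and y: "y \<in> carrier G" and fxy: "f x = f y"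
      have c: "r (pA x) \<in> carrier G" "r (pA y) \<in> carrier G" "q x \<in> carrier G" "q y \<in> carrier G"
        using rc pAA qc x y by blast+
      let ?u = "r (pA x) \<otimes> q x" and ?v = "r (pA y) \<otimes> q y"
      have uc: "?u \<in> carrier G" and vc: "?v \<in> carrier G" using c by auto
      have "K #> ?v = K #> ?u" using fxy unfolding f_def by simp
      then have "?u \<in> K #> ?v" using repr_independenceD[OF K uc] by simp
      then have uv: "?u \<otimes> inv ?v \<in> K" using subgroup.rcos_module_imp[OF K is_group vc] by blast
      have uv2: "?u \<otimes> inv ?v = (r (pA x) \<otimes> inv (r (pA y))) \<otimes> (q x \<otimes> inv (q y))"
        using divx[OF c(1) c(3) c(2) c(4)] .
      have rxA: "r (pA x) \<in> A" using r pAA x by blast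
      have ryA: "r (pA y) \<in> A" using r pAA y by blast
      have rA: "r (pA x) \<otimes> inv (r (pA y)) \<in> A" using Am[OF rxA Ai[OF ryA]] .
      have rAc: "r (pA x) \<otimes> inv (r (pA y)) \<in> carrier G" using Ac rA by blast
      have qq: "q x \<otimes> inv (q y) \<in> carrier G" using c by simp
      have "q x \<otimes> inv (q y) = inv (r (pA x) \<otimes> inv (r (pA y))) \<otimes> (?u \<otimes> inv ?v)"
        by (subst uv2) (rule solx[OF rAc qq])
      moreover have "inv (r (pA x) \<otimes> inv (r (pA y))) \<otimes> (?u \<otimes> inv ?v) \<in> A"
        using Am[OF Ai[OF rA]] uv KA by blast
      ultimately have "q x \<otimes> inv (q y) \<in> A" by simp
      moreover have "q x \<otimes> inv (q y) \<in> B" using Bm Bi qB x y by blast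
      ultimately have qeq1: "q x \<otimes> inv (q y) = \<one>" using AB by blast
      then have qeq: "q x = q y" using c inv_solve_right'[of "\<one>" "q x" "q y"] by simp
      have "r (pA x) \<otimes> inv (r (pA y)) \<in> K" using uv uv2 qeq1 rAc by simp
      then have "r (pA x) \<in> K #> r (pA y)" using subgroup.rcos_module_rev[OF K is_group c(2) c(1)] by blast
      then have "K #> r (pA y) = K #> r (pA x)" using repr_independence[OF _ c(2) K] by simp
      then have "\<phi> (pA x) = \<phi> (pA y)" using r[OF pAA[OF x]] r[OF pAA[OF y]] by simp
      then have pxy: "pA x = pA y" using inj_onD[OF phi _ pAA[OF x] pAA[OF y]] by simp
      have "x = pA x \<otimes> q x" using pq[OF x] by simp
      also have "\<dots> = pA y \<otimes> q y" using pxy qeq by simp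
      also have "\<dots> = y" using pq[OF y] .
      finally show "x = y" .
    qed
    obtain C where dsC: "direct_summand C G" and essC: "essential_in K C G"
      using SGB[OF K] fh fi by blast
    obtain D where C: "subgroup C G" and D: "subgroup D G" and CD: "C \<inter> D = {\<one>}"
        and CD2: "C <#> D = carrier G"
      using dsC unfolding direct_summand_def by blast
    obtain pC where pCh: "pC \<in> hom G G" and pCin: "\<forall>g\<in>carrier G. pC g \<in> C \<and> inv (pC g) \<otimes> g \<in> D"
        and pCab: "\<forall>a\<in>C. \<forall>b\<in>D. pC (a \<otimes> b) = a"
      using decomp[OF C D CD CD2] by blast
    show "\<exists>E. direct_summand E ?G' \<and> essential_in K E ?G'"
      using key[OF A B AB pAh pAin pAab C D CD pCh pCin pCab K KA essC] by blast
  qed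
qed

theorem theorem2p5:
  fixes G :: "('a, 'b) monoid_scheme" and A :: "'a set"
  assumes "comm_group G"
    and "semi_generalized_bassian G"
    and "direct_summand A G"
  shows "semi_generalized_bassian (G\<lparr>carrier := A\<rparr>)"
  using comm_group.main_lemma[OF assms(1) TrueI assms(2) assms(3)] .

end
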